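(* Let $\mathbf b\in\mathcal B$ and $u\in M$ with $u-\mathbf b\in\mathbb Z A_+$, and write $\mathbf b=\sum_{j=1}^mv_j\mathbf a_j$ with $v_j\in[0,1)$. Let $s_0\in\{0,1,\dots,\ell_0-1\}$ be the unique element with $u+s_0\mathbf a_0\equiv\mathbf b\pmod{\mathbb ZA}$ and let $s_1,\dots,s_m\in\mathbb Z$ be the unique integers with $u+s_0\mathbf a_0=\mathbf b-\sum_{j=1}^ms_j\mathbf a_j$. Then \[G^{(\mathbf b)}_u(\lambda)=\Big(\prod_{j=1}^m[-v_j]_{s_j}\prod_{j=1}^m\ell_j^{s_j}\Big)\frac{(-\ell_0)^{s_0}}{s_0!}F^{(\mathbf b)}_u(\lambda),\] where \[F^{(\mathbf b)}_u(\lambda)=\lambda^{s_0}\sum_{s=0}^\infty\frac{\prod_{j=1}^m\prod_{\sigma=0}^{\ell_j-1}\big(\frac{v_j-s_j+\sigma}{\ell_j}\big)_s}{\prod_{t=1}^{\ell_0}\big(\frac{s_0+t}{\ell_0}\big)_s}\lambda^{s\ell_0}.\]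
   Context: Let $A=\{\mathbf a_1,\dots,\mathbf a_m\}\subseteq\mathbb Z^n$ be linearly independent over $\mathbb R$, $\mathbf a_0\in\mathbb Z^n$, and $\ell_0,\ell_1,\dots,\ell_m$ positive integers with gcd $1$ such that $\ell_0\mathbf a_0=\sum_{j=1}^m\ell_j\mathbf a_j$ and $\ell_0=\sum_{j=1}^m\ell_j$. Put $A_+=A\cup\{\mathbf a_0\}$; $\mathbb ZA$ and $\mathbb ZA_+$ denote the subgroups of $\mathbb Z^n$ generated by $A$, $A_+$. Let $V$ be the real span of $A$, $V_{\mathbb Z}=V\cap\mathbb Z^n$, $C(A)$ the closed real cone generated by $A$, $M=V_{\mathbb Z}\cap C(A)$. Let $P(A)=\{\sum_jc_j\mathbf a_j:0\le c_j<1\}$ and $\mathcal B=V_{\mathbb Z}\cap P(A)$. Pochhammer symbol: $(a)_s=a(a+1)\cdots(a+s-1)$, $(a)_0=1$. For $z\in\mathbb C$, $l\in\mathbb Z$: $[z]_0=1$, $[z]_l=1/((z+1)\cdots(z+l))$ for $l>0$, $[z]_l=z(z-1)\cdots(z+l+1)$ for $l<0$. For $\mathbf b=\sum_jv_j\mathbf a_j\in\mathcal B$ ($v_j\in[0,1)$) and $u\in M$, let $g^{(\mathbf b)}_u=\prod_{j=1}^m[-v_j]_{s_j}\ell_j^{s_j}$ if $u=\sum_j(v_j-s_j)\mathbf a_j$ with all $s_j\in\mathbb Z_{\le0}$, and $g^{(\mathbf b)}_u=0$ otherwise; and $G^{(\mathbf b)}_u(\lambda)=\sum_{s\ge0}g^{(\mathbf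 b)}_{u+s\mathbf a_0}\frac{(-\ell_0\lambda)^s}{s!}\in\mathbb C[[\lambda]]$. *)

theory Defs
  imports "HOL-Analysis.Analysis" "HOL-Computational_Algebra.Formal_Power_Series"
begin

definition rvec :: "int ^ 'n \<Rightarrow> real ^ 'n" where
  "rvec x = (\<chi> i. of_int (x $ i))"

definition bracket :: "complex \<Rightarrow> int \<Rightarrow> complex" where
  "bracket z l =
     (if l \<ge> 0 then inverse (\<Prod>k=1..nat l. z + of_nat k)
      else (\<Prod>k<nat (-l). z - of_nat k))"

text \<open>The coefficient g^(b)_w, where b = sum_j v_j a_j (j = 1..m).
  The representation w = sum_j (v_j - t_j) a_j is unique by linear independence.\<close>
definition gcoef :: "(nat \<Rightarrow> int ^ 'n) \<Rightarrow> (nat \<Rightarrow> nat) \<Rightarrow> nat \<Rightarrow> (nat \<Rightarrow> real)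
                      \<Rightarrow> int ^ 'n \<Rightarrow> complex" where
  "gcoef a l m v w =
     (if \<exists>t::nat \<Rightarrow> int. (\<forall>j\<in>{1..m}. t j \<le> 0) \<and>
            rvec w = (\<Sum>j=1..m. (v j - of_int (t j)) *\<^sub>R rvec (a j))
      then (let t = (SOME t::nat \<Rightarrow> int. (\<forall>j\<in>{1..m}. t j \<le> 0) \<and>
            rvec w = (\<Sum>j=1..m. (v j - of_int (t j)) *\<^sub>R rvec (a j)))
            in (\<Prod>j=1..m. bracket (- complex_of_real (v j)) (t j) * (of_nat (l j)) powi (t j)))
      else 0)"

definition Gser :: "(nat \<Rightarrow> int ^ 'n) \<Rightarrow> (nat \<Rightarrow> nat) \<Rightarrow> nat \<Rightarrow> (nat \<Rightarrow> real)
                      \<Rightarrow> int ^ 'n \<Rightarrow> complex fps" where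
  "Gser a l m v u = Abs_fps (\<lambda>s. gcoef a l m v (u + int s *s a 0)
                                   * (- of_nat (l 0)) ^ s / fact s)"

definition Fcoef :: "(nat \<Rightarrow> nat) \<Rightarrow> nat \<Rightarrow> (nat \<Rightarrow> real) \<Rightarrow> nat \<Rightarrow> (nat \<Rightarrow> int) \<Rightarrow> nat \<Rightarrow> complex" where
  "Fcoef l m v s0 s k =
     (\<Prod>j=1..m. \<Prod>\<sigma><l j. pochhammer ((complex_of_real (v j) - of_int (s j) + of_nat \<sigma>) / of_nat (l j)) k)
     / (\<Prod>t=1..l 0. pochhammer ((of_nat s0 + of_nat t) / of_nat (l 0)) k)"

definition Fser :: "(nat \<Rightarrow> nat) \<Rightarrow> nat \<Rightarrow> (nat \<Rightarrow> real) \<Rightarrow> nat \<Rightarrow> (nat \<Rightarrow> int) \<Rightarrow> complex fps" where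
  "Fser l m v s0 s = fps_X ^ s0 *
     Abs_fps (\<lambda>k. if l 0 dvd k then Fcoef l m v s0 s (k div l 0) else 0)"

end

theory Submission imports Defs begin

lemma rvec_add: "rvec (x + y) = rvec x + rvec y"
  by (simp add: rvec_def vec_eq_iff)
lemma rvec_diff: "rvec (x - y) = rvec x - rvec y"
  by (simp add: rvec_def vec_eq_iff)
lemma rvec_smult: "rvec (c *s x) = of_int c *\<^sub>R rvec x"
  by (simp add: rvec_def vec_eq_iff)
lemma rvec_zero: "rvec 0 = 0"
  by (simp add: rvec_def vec_eq_iff)
lemma rvec_sum: "rvec (sum f S) = (\<Sum>i\<in>S. rvec (f i))"
  by (induction S rule: infinite_finite_induct) (auto simp: rvec_add rvec_zero)

lemma pochhammer_mult:
  fixes z :: "'a::field_char_0"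
  assumes "l > 0"
  shows "pochhammer z (l*r) = of_nat l ^ (l*r) * (\<Prod>\<sigma><l. pochhammer ((z + of_nat \<sigma>)/of_nat l) r)"
proof (induction r)
  case 0 then show ?case by simp
next
  case (Suc r)
  have e1: "(\<Prod>\<sigma><l. (z + of_nat \<sigma>)/of_nat l + of_nat r) = pochhammer (z + of_nat (l*r)) l / of_nat l ^ l"
  proof -
    have "(\<Prod>\<sigma><l. (z + of_nat \<sigma>)/of_nat l + of_nat r) = (\<Prod>\<sigma><l. (z + of_nat (l*r) + of_nat \<sigma>) / of_nat l)"
      using assms by (intro prod.cong) (auto simp: field_simps)
    also have "\<dots> = (\<Prod>\<sigma><l. (z + of_nat (l*r) + of_nat \<sigma>)) / of_nat l ^ l"
      by (simp add: prod_dividef)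
    finally show ?thesis by (simp add: pochhammer_prod atLeast0LessThan)
  qed
  have "pochhammer z (l * Suc r) = pochhammer z (l*r) * pochhammer (z + of_nat (l*r)) l"
    using pochhammer_product'[of z "l*r" l] by (simp add: add.commute)
  also have "\<dots> = of_nat l ^ (l*r) * (\<Prod>\<sigma><l. pochhammer ((z + of_nat \<sigma>)/of_nat l) r) * (of_nat l ^ l * (\<Prod>\<sigma><l. (z + of_nat \<sigma>)/of_nat l + of_nat r))"
    using assms by (simp add: Suc e1)
  also have "\<dots> = of_nat l ^ (l * Suc r) * (\<Prod>\<sigma><l. pochhammer ((z + of_nat \<sigma>)/of_nat l) (Suc r))"
    by (simp add: pochhammer_Suc prod.distrib power_add mult_ac)
  finally show ?case .
qed

lemma bracket_nonpos: "s \<le> 0 \<Longrightarrow> bracket z s = (\<Prod>k<nat (-s). z - of_nat k)"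
  by (cases "s = 0") (auto simp: bracket_def)

lemma prod_lessThan_add: fixes f :: "nat \<Rightarrow> 'a::comm_monoid_mult" shows "(\<Prod>k<N+n. f k) = (\<Prod>k<N. f k) * (\<Prod>k<n. f (N+k))"
  by (induction n) (auto simp: mult_ac)

lemma bracket_step:
  fixes w :: complex
  assumes "s \<le> 0"
  shows "bracket (-w) (s - int n) = bracket (-w) s * (-1)^n * pochhammer (w - of_int s) n"
proof -
  have "nat (-(s - int n)) = nat (-s) + n" using assms by simp
  then have "bracket (-w) (s - int n) = (\<Prod>k<nat (-s). -w - of_nat k) * (\<Prod>k<n. -w - of_nat (nat (-s) + k))"
    using assms by (simp add: bracket_nonpos prod_lessThan_add)
  also have "(\<Prod>k<n. -w - of_nat (nat (-s) + k)) = (\<Prod>k<n. (-1) * (w - of_int s + of_nat k))"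
    using assms by (intro prod.cong) (auto simp: of_nat_add)
  also have "\<dots> = (-1)^n * pochhammer (w - of_int s) n"
    by (simp only: prod.distrib prod_constant card_lessThan) (simp add: pochhammer_prod atLeast0LessThan)
  finally show ?thesis using assms by (simp add: bracket_nonpos)
qed

lemma powi_step:
  assumes "l > 0"
  shows "(of_nat l :: complex) powi (s - int n) = of_nat l powi s / of_nat l ^ n"
  using assms by (simp add: power_int_diff)

lemma gcd_arg:
  fixes l :: "nat \<Rightarrow> nat" and d :: int
  assumes "\<forall>j\<in>{1..m}. int (l 0) dvd d * int (l j)" and "Gcd (l ` {0..m}) = 1"
  shows "int (l 0) dvd d"
proof -
  define n where "n = nat \<bar>d\<bar>"
  have "l 0 dvd n * l j" if "j \<in> {0..m}" for j
  proof (cases "j = 0")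
    case True then show ?thesis by simp
  next
    case False
    with that assms(1) have "int (l 0) dvd d * int (l j)" by auto
    then have "int (l 0) dvd \<bar>d\<bar> * int (l j)" by (metis abs_mult dvd_abs_iff of_nat_0_le_iff abs_of_nonneg)
    then show ?thesis unfolding n_def
      by (metis abs_ge_zero int_dvd_int_iff int_nat_eq of_nat_mult)
  qed
  then have "l 0 dvd Gcd ((*) n ` (l ` {0..m}))" by (auto intro!: Gcd_greatest)
  also have "Gcd ((*) n ` (l ` {0..m})) = n" by (simp add: Gcd_mult assms(2))
  finally have "l 0 dvd n" .
  then show ?thesis unfolding n_def
    by (metis abs_ge_zero dvd_abs_iff int_dvd_int_iff int_nat_eq)
qed


theorem theorem4p7:
  fixes a :: "nat \<Rightarrow> int ^ 'n" and l :: "nat \<Rightarrow> nat" and m :: nat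
    and b u :: "int ^ 'n" and v :: "nat \<Rightarrow> real" and s0 :: nat and s :: "nat \<Rightarrow> int"
  assumes indep: "inj_on (\<lambda>j. rvec (a j)) {1..m}" "independent ((\<lambda>j. rvec (a j)) ` {1..m})"
    and l_pos: "\<forall>j\<in>{0..m}. l j > 0"
    and l_gcd: "Gcd (l ` {0..m}) = 1"
    and rel: "int (l 0) *s a 0 = (\<Sum>j=1..m. int (l j) *s a j)"
    and l0_sum: "l 0 = (\<Sum>j=1..m. l j)"
    and v_range: "\<forall>j\<in>{1..m}. 0 \<le> v j \<and> v j < 1"
    and b_rep: "rvec b = (\<Sum>j=1..m. v j *\<^sub>R rvec (a j))"
    and u_M: "\<exists>c::nat \<Rightarrow> real. (\<forall>j\<in>{1..m}. 0 \<le> c j) \<and> rvec u = (\<Sum>j=1..m. c j *\<^sub>R rvec (a j))"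
    and u_lat: "\<exists>k::nat \<Rightarrow> int. u - b = (\<Sum>j=0..m. k j *s a j)"
    and s0_lt: "s0 < l 0"
    and s_rep: "u + int s0 *s a 0 = b - (\<Sum>j=1..m. s j *s a j)"
  shows "Gser a l m v u =
           fps_const ((\<Prod>j=1..m. bracket (- complex_of_real (v j)) (s j))
                      * (\<Prod>j=1..m. (of_nat (l j)) powi (s j))
                      * (- of_nat (l 0)) ^ s0 / fact s0)
           * Fser l m v s0 s"
proof -
  define A where "A j = rvec (a j)" for j
  have uniq: "\<forall>j\<in>{1..m}. c j = d j"
    if eq: "(\<Sum>j=1..m. c j *\<^sub>R A j) = (\<Sum>j=1..m. d j *\<^sub>R A j)" for c d :: "nat \<Rightarrow> real"
  proof
    fix j0 assume j0: "j0 \<in> {1..m}"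
    define g where "g x = c (inv_into {1..m} A x) - d (inv_into {1..m} A x)" for x
    have injA: "inj_on A {1..m}" using indep(1) unfolding A_def by simp
    have "(\<Sum>x\<in>A ` {1..m}. g x *\<^sub>R x) = (\<Sum>j=1..m. g (A j) *\<^sub>R A j)"
      using sum.reindex[OF injA, of "\<lambda>x. g x *\<^sub>R x"] by (simp add: o_def)
    also have "\<dots> = (\<Sum>j=1..m. (c j - d j) *\<^sub>R A j)"
    proof (rule sum.cong[OF refl])
      fix x assume "x \<in> {1..m}"
      then show "g (A x) *\<^sub>R A x = (c x - d x) *\<^sub>R A x" unfolding g_def by (simp only: inv_into_f_f[OF injA])
    qed
    also have "\<dots> = 0" using eq by (simp add: scaleR_diff_left sum_subtractf)
    finally have z: "(\<Sum>x\<in>A ` {1..m}. g x *\<^sub>R x) = 0" .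
    have "independent (A ` {1..m})" using indep(2) unfolding A_def by simp
    then have "\<forall>u. (\<forall>v\<in>{1..m}. u (A v) = 0) \<or> (\<Sum>v\<in>A ` {1..m}. u v *\<^sub>R v) \<noteq> 0"
      using dependent_finite[of "A ` {1..m}"] by auto
    then have "g (A j0) = 0" using z j0 by blast
    then show "c j0 = d j0" unfolding g_def by (simp only: inv_into_f_f[OF injA j0])
  qed
  have l0pos: "l 0 > 0" using l_pos by auto
  have "real (l 0) *\<^sub>R A 0 = (\<Sum>j=1..m. real (l j) *\<^sub>R A j)"
    using arg_cong[OF rel, of rvec] by (simp add: rvec_smult rvec_sum A_def)
  then have "inverse (real (l 0)) *\<^sub>R (real (l 0) *\<^sub>R A 0) = (\<Sum>j=1..m. inverse (real (l 0)) *\<^sub>R (real (l j) *\<^sub>R A j))"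
    by (simp add: scaleR_sum_right)
  then have a0: "A 0 = (\<Sum>j=1..m. (real (l j) / real (l 0)) *\<^sub>R A j)"
    using l0pos by (simp add: divide_inverse_commute)
  have uk: "rvec (u + int k *s a 0) = (\<Sum>j=1..m. (v j - (of_int (s j) - (real k - real s0) * real (l j) / real (l 0))) *\<^sub>R A j)"
    for k :: nat
  proof -
    have "u + int k *s a 0 = (u + int s0 *s a 0) + (int k - int s0) *s a 0"
      by (simp add: vec_eq_iff algebra_simps)
    then have "rvec (u + int k *s a 0) = rvec (u + int s0 *s a 0) + rvec ((int k - int s0) *s a 0)"
      by (simp only: rvec_add)
    also have "\<dots> = rvec b - (\<Sum>j=1..m. of_int (s j) *\<^sub>R A j) + (real k - real s0) *\<^sub>R A 0"
      unfolding s_rep rvec_diff rvec_sum rvec_smult A_def by simp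
    finally have "rvec (u + int k *s a 0) = rvec b - (\<Sum>j=1..m. of_int (s j) *\<^sub>R A j) + (real k - real s0) *\<^sub>R A 0" .
    also have "\<dots> = (\<Sum>j=1..m. v j *\<^sub>R A j) - (\<Sum>j=1..m. of_int (s j) *\<^sub>R A j) + (\<Sum>j=1..m. ((real k - real s0) * (real (l j) / real (l 0))) *\<^sub>R A j)"
      unfolding b_rep[folded A_def] a0 scaleR_sum_right by (simp add: mult.assoc)
    also have "\<dots> = (\<Sum>j=1..m. (v j - (of_int (s j) - (real k - real s0) * real (l j) / real (l 0))) *\<^sub>R A j)"
      by (simp add: sum_subtractf[symmetric] sum.distrib[symmetric] algebra_simps)
    finally show ?thesis .
  qed
  have s_nonpos: "s j \<le> 0" if j: "j \<in> {1..m}" for j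
  proof -
    obtain c where c: "\<forall>j\<in>{1..m}. 0 \<le> c j" "rvec u = (\<Sum>j=1..m. c j *\<^sub>R A j)"
      using u_M unfolding A_def by blast
    have "rvec u = (\<Sum>j=1..m. (v j - (of_int (s j) - (real 0 - real s0) * real (l j) / real (l 0))) *\<^sub>R A j)"
    proof -
      have e: "u + int 0 *s a 0 = u" by (simp add: vec_eq_iff)
      show ?thesis using uk[of 0] unfolding e .
    qed
    then have "(\<Sum>j=1..m. c j *\<^sub>R A j) = (\<Sum>j=1..m. (v j - (of_int (s j) - (real 0 - real s0) * real (l j) / real (l 0))) *\<^sub>R A j)"
      using c(2) by simp
    from bspec[OF uniq[OF this] j]
    have "c j = v j - (of_int (s j) - (real 0 - real s0) * real (l j) / real (l 0))" .
    then have X: "c j = v j - of_int (s j) - real s0 * real (l j) / real (l 0)" by simp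
    define dd where "dd = real s0 * real (l j) / real (l 0)"
    have "dd \<ge> 0" by (simp add: dd_def)
    moreover have "0 \<le> c j" "v j < 1" using c(1) v_range j by auto
    ultimately have "of_int (s j) < (1::real)" using X[folded dd_def] by linarith
    then show ?thesis by simp
  qed
  let ?C = "(\<Prod>j=1..m. bracket (- complex_of_real (v j)) (s j))
                      * (\<Prod>j=1..m. (of_nat (l j)) powi (s j))
                      * (- of_nat (l 0)) ^ s0 / fact s0"
  show ?thesis
  proof (rule fps_ext)
    fix k
    have L: "fps_nth (Gser a l m v u) k = gcoef a l m v (u + int k *s a 0) * (- of_nat (l 0)) ^ k / fact k"
      by (simp add: Gser_def)
    have R: "fps_nth (fps_const ?C * Fser l m v s0 s) k = ?C * (if k < s0 then 0 else if l 0 dvd (k - s0) then Fcoef l m v s0 s ((k - s0) div l 0) else 0)"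
      by (simp add: Fser_def fps_X_power_mult_nth)
    show "fps_nth (Gser a l m v u) k = fps_nth (fps_const ?C * Fser l m v s0 s) k"
    proof (cases "s0 \<le> k \<and> l 0 dvd (k - s0)")
      case True
      then obtain r where r: "k = s0 + l 0 * r" by (metis dvd_def le_add_diff_inverse)
      define t where "t j = s j - int (r * l j)" for j
      define P where "P t' \<longleftrightarrow> (\<forall>j\<in>{1..m}. t' j \<le> 0) \<and>
            rvec (u + int k *s a 0) = (\<Sum>j=1..m. (v j - of_int (t' j)) *\<^sub>R rvec (a j))" for t' :: "nat \<Rightarrow> int"
      have Pt: "P t"
      proof -
        have "rvec (u + int k *s a 0) = (\<Sum>j=1..m. (v j - of_int (t j)) *\<^sub>R A j)"
          unfolding uk using l0pos by (intro sum.cong) (auto simp: t_def r field_simps)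
        moreover have "\<forall>j\<in>{1..m}. t j \<le> 0"
        proof
          fix j assume "j \<in> {1..m}"
          then have "s j \<le> 0" by (rule s_nonpos)
          moreover have "0 \<le> int (r * l j)" by simp
          ultimately show "t j \<le> 0" unfolding t_def by linarith
        qed
        ultimately show ?thesis by (simp add: P_def A_def)
      qed
      have tu: "t' j = t j" if "P t'" "j \<in> {1..m}" for t' j
      proof -
        have "(\<Sum>j=1..m. (v j - of_int (t' j)) *\<^sub>R A j) = (\<Sum>j=1..m. (v j - of_int (t j)) *\<^sub>R A j)"
          using that(1) Pt by (simp add: P_def A_def)
        from uniq[OF this] that(2) show ?thesis by auto
      qed
      have "gcoef a l m v (u + int k *s a 0) = (\<Prod>j=1..m. bracket (- complex_of_real (v j)) (t j) * (of_nat (l j)) powi (t j))"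
      proof -
        have ex: "\<exists>t'. P t'" using Pt by blast
        have "P (SOME t'. P t')" using someI_ex[OF ex] .
        then have "\<forall>j\<in>{1..m}. (SOME t'. P t') j = t j" using tu by blast
        then have "(\<Prod>j=1..m. bracket (- complex_of_real (v j)) ((SOME t'. P t') j) * (of_nat (l j)) powi ((SOME t'. P t') j))
            = (\<Prod>j=1..m. bracket (- complex_of_real (v j)) (t j) * (of_nat (l j)) powi (t j))"
          by (intro prod.cong) auto
        moreover have "gcoef a l m v (u + int k *s a 0) = (if \<exists>t'. P t' then (let t' = SOME t'. P t' in
            (\<Prod>j=1..m. bracket (- complex_of_real (v j)) (t' j) * (of_nat (l j)) powi (t' j))) else 0)"
          unfolding gcoef_def P_def by (rule refl)
        ultimately show ?thesis using ex by (simp add: Let_def)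
      qed
      also have "\<dots> = (\<Prod>j=1..m. bracket (- complex_of_real (v j)) (s j) * of_nat (l j) powi (s j) * (-1)^(r * l j)
              * (\<Prod>\<sigma><l j. pochhammer ((complex_of_real (v j) - of_int (s j) + of_nat \<sigma>) / of_nat (l j)) r))"
      proof (intro prod.cong refl)
        fix j assume j: "j \<in> {1..m}"
        have lj: "l j > 0" using l_pos j by auto
        show "bracket (- complex_of_real (v j)) (t j) * (of_nat (l j)) powi (t j) = bracket (- complex_of_real (v j)) (s j) * of_nat (l j) powi (s j) * (-1)^(r * l j)
              * (\<Prod>\<sigma><l j. pochhammer ((complex_of_real (v j) - of_int (s j) + of_nat \<sigma>) / of_nat (l j)) r)"
        proof -
          have pm: "pochhammer (complex_of_real (v j) - of_int (s j)) (r * l j) = of_nat (l j)^(r * l j) *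
             (\<Prod>\<sigma><l j. pochhammer ((complex_of_real (v j) - of_int (s j) + of_nat \<sigma>) / of_nat (l j)) r)"
            using pochhammer_mult[OF lj, of "complex_of_real (v j) - of_int (s j)" r] by (metis mult.commute)
          have nz: "(of_nat (l j) :: complex)^(r * l j) \<noteq> 0" using lj by simp
          show ?thesis
            unfolding t_def bracket_step[OF s_nonpos[OF j]] powi_step[OF lj] pm
            using nz lj by (simp add: field_simps)
        qed
      qed
      also have "\<dots> = (\<Prod>j=1..m. bracket (- complex_of_real (v j)) (s j)) * (\<Prod>j=1..m. of_nat (l j) powi (s j)) * (-1)^(r * l 0)
              * (\<Prod>j=1..m. \<Prod>\<sigma><l j. pochhammer ((complex_of_real (v j) - of_int (s j) + of_nat \<sigma>) / of_nat (l j)) r)"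
        by (simp add: prod.distrib power_sum l0_sum sum_distrib_left)
      finally have G: "gcoef a l m v (u + int k *s a 0) = \<dots>" .
      define Q where "Q = (\<Prod>t=1..l 0. pochhammer ((of_nat s0 + of_nat t) / of_nat (l 0)) r :: complex)"
      have fk: "fact k = (fact s0 :: complex) * of_nat (l 0) ^ (l 0 * r) * Q"
      proof -
        have "(fact k :: complex) = pochhammer 1 (s0 + l 0 * r)" by (simp add: r pochhammer_fact)
        also have "\<dots> = fact s0 * pochhammer (of_nat s0 + 1) (l 0 * r)"
          by (simp add: pochhammer_product' pochhammer_fact add.commute)
        also have "pochhammer (of_nat s0 + 1 :: complex) (l 0 * r) = of_nat (l 0) ^ (l 0 * r) * Q"
        proof -
          have "Q = (\<Prod>\<sigma><l 0. pochhammer ((of_nat s0 + of_nat (Suc \<sigma>)) / of_nat (l 0)) r)"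
            unfolding Q_def One_nat_def by (rule prod.atLeast1_atMost_eq)
          also have "\<dots> = (\<Prod>\<sigma><l 0. pochhammer ((of_nat s0 + 1 + of_nat \<sigma>) / of_nat (l 0)) r)"
            by (intro prod.cong refl) (simp add: add_ac)
          finally show ?thesis unfolding pochhammer_mult[OF l0pos] by simp
        qed
        finally show ?thesis by (simp add: mult_ac)
      qed
      have "fact k \<noteq> (0::complex)" by simp
      then have Qnz: "Q \<noteq> 0" using fk by auto
      have pk: "(- of_nat (l 0) :: complex) ^ k = (- of_nat (l 0)) ^ s0 * (-1)^(r * l 0) * of_nat (l 0) ^ (l 0 * r)"
      proof -
        have "(- of_nat (l 0) :: complex) ^ k = (- of_nat (l 0)) ^ s0 * (- of_nat (l 0)) ^ (l 0 * r)"
          by (simp only: r power_add)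
        also have "(- of_nat (l 0) :: complex) ^ (l 0 * r) = (-1) ^ (l 0 * r) * of_nat (l 0) ^ (l 0 * r)"
          by (rule power_minus)
        finally show ?thesis by (simp only: mult.commute[of r] mult.assoc)
      qed
      have sq: "((-1::complex)^(r * l 0)) * (-1)^(r * l 0) = 1"
        by (simp add: power_add[symmetric])
      have Fc: "Fcoef l m v s0 s r = (\<Prod>j=1..m. \<Prod>\<sigma><l j. pochhammer ((complex_of_real (v j) - of_int (s j) + of_nat \<sigma>) / of_nat (l j)) r) / Q"
        by (simp add: Fcoef_def Q_def)
      have kd: "(k - s0) div l 0 = r" using l0pos by (simp add: r)
      show ?thesis
        unfolding L R G fk pk using True kd Fc Qnz l0pos
        by (simp add: field_simps)
    next
      case False
      have "gcoef a l m v (u + int k *s a 0) = 0"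
      proof -
        have "\<not> (\<exists>t::nat \<Rightarrow> int. (\<forall>j\<in>{1..m}. t j \<le> 0) \<and>
            rvec (u + int k *s a 0) = (\<Sum>j=1..m. (v j - of_int (t j)) *\<^sub>R rvec (a j)))"
        proof
          assume "\<exists>t::nat \<Rightarrow> int. (\<forall>j\<in>{1..m}. t j \<le> 0) \<and>
            rvec (u + int k *s a 0) = (\<Sum>j=1..m. (v j - of_int (t j)) *\<^sub>R rvec (a j))"
          then obtain t :: "nat \<Rightarrow> int" where t: "rvec (u + int k *s a 0) = (\<Sum>j=1..m. (v j - of_int (t j)) *\<^sub>R A j)"
            unfolding A_def by blast
          have tt: "\<forall>j\<in>{1..m}. v j - of_int (t j) = v j - (of_int (s j) - (real k - real s0) * real (l j) / real (l 0))"
            using uniq[OF trans[OF t[symmetric] uk[of k]]] .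
          then have "int (l 0) dvd (int k - int s0) * int (l j)" if j: "j \<in> {1..m}" for j
          proof -
            have "real_of_int (t j) = of_int (s j) - (real k - real s0) * real (l j) / real (l 0)"
              using bspec[OF tt j] by simp
            then have "real_of_int (t j) * real (l 0) = of_int (s j) * real (l 0) - (real k - real s0) * real (l j)"
              using l0pos by (simp add: field_simps)
            then have "real_of_int ((int k - int s0) * int (l j)) = real_of_int ((s j - t j) * int (l 0))"
              by (simp add: algebra_simps)
            then have "(int k - int s0) * int (l j) = (s j - t j) * int (l 0)"
              using of_int_eq_iff by blast
            then show ?thesis by (metis dvd_triv_right)
          qed
          then have "int (l 0) dvd int k - int s0" using gcd_arg[OF _ l_gcd] by blast
          then obtain q where q: "int k - int s0 = int (l 0) * q" by (auto simp: dvd_def)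
          have "q \<ge> 0"
          proof (rule ccontr)
            assume "\<not> q \<ge> 0"
            then have "int (l 0) * q \<le> - int (l 0)" using mult_left_mono[of q "-1" "int (l 0)"] by simp
            then show False using q s0_lt by linarith
          qed
          then have q0: "0 \<le> q" .
          then have "int (l 0) * q \<ge> 0" by simp
          then have ks: "s0 \<le> k" using q by linarith
          then have "int (k - s0) = int (l 0 * nat q)" using q q0 by (simp add: of_nat_diff)
          then have "k - s0 = l 0 * nat q" by (simp only: of_nat_eq_iff)
          then have "l 0 dvd (k - s0)" by (rule dvdI)
          with ks have "s0 \<le> k \<and> l 0 dvd (k - s0)" by blast
          then show False using False by blast
        qed
        then show ?thesis unfolding gcoef_def by (rule if_not_P)
      qed
      then show ?thesis unfolding L R using False by auto
    qed
  qed
qed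

end
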